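(* Let $\Gamma_M$ ($M>0$) be a family of nonatomic routing games with a single OD pair with demand $M$, sharing the same graph, path set $\mathcal P$ and edge costs $(c_e)_{e\in\mathcal E}$. Suppose there exists a path $p\in\mathcal P$ with bounded costs, i.e. $\lim_{x\to\infty}c_e(x)<\infty$ for all $e\in p$. Then $\mathrm{PoA}(\Gamma_M)\to 1$ as $M\to\infty$.
   Context: A nonatomic routing game with a single OD pair consists of a finite directed multigraph with edge set $\mathcal E$, a nonempty finite set $\mathcal P$ of paths from an origin to a destination, a demand $M>0$, and continuous nondecreasing edge costs $c_e:[0,\infty)\to[0,\infty)$. Feasible flows: $f\in\mathbb R_+^{\mathcal P}$ with $\sum_p f_p=M$; loads $x_e=\sum_{p\ni e}f_p$; path costs $c_p(f)=\sum_{e\in p}c_e(x_e)$. A Wardrop equilibrium is a feasible $f^*$ with $c_p(f^* )\le c_{p'}(f^* )$ whenever $f^*_p>0$. Social cost $L(x)=\sum_e x_ec_e(x_e)$; $\mathrm{Opt}$ is its minimum over feasible loads, $\mathrm{Eq}=L(x^* )$ at an equilibrium load, and $\mathrm{PoA}=\mathrm{Eq}/\mathrm{Opt}$; it is assumed throughout that $\mathrm{Opt}>0$ (otherwise $\mathrm{PoA}:=1$). *)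

theory Defs
  imports "HOL-Analysis.Analysis"
begin

text \<open>Finite directed multigraph: edges of a finite type 'e, each edge e goes from
  tl_of e to hd_of e.\<close>

definition path_vertices :: "('e \<Rightarrow> 'v) \<Rightarrow> ('e \<Rightarrow> 'v) \<Rightarrow> 'e list \<Rightarrow> 'v list" where
  "path_vertices tl_of hd_of p = map tl_of p @ [hd_of (last p)]"

definition is_od_path :: "('e \<Rightarrow> 'v) \<Rightarrow> ('e \<Rightarrow> 'v) \<Rightarrow> 'v \<Rightarrow> 'v \<Rightarrow> 'e list \<Rightarrow> bool" where
  "is_od_path tl_of hd_of orig dest p \<longleftrightarrow>
     p \<noteq> [] \<and> tl_of (hd p) = orig \<and> hd_of (last p) = dest \<and>
     (\<forall>i. Suc i < length p \<longrightarrow> hd_of (p ! i) = tl_of (p ! Suc i)) \<and>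
     distinct (path_vertices tl_of hd_of p)"

definition feasible_flows :: "'e list set \<Rightarrow> real \<Rightarrow> ('e list \<Rightarrow> real) set" where
  "feasible_flows P M = {f. (\<forall>p. p \<notin> P \<longrightarrow> f p = 0) \<and> (\<forall>p\<in>P. 0 \<le> f p) \<and> (\<Sum>p\<in>P. f p) = M}"

definition edge_load :: "'e list set \<Rightarrow> ('e list \<Rightarrow> real) \<Rightarrow> 'e \<Rightarrow> real" where
  "edge_load P f e = (\<Sum>p\<in>{p\<in>P. e \<in> set p}. f p)"

definition path_cost :: "('e \<Rightarrow> real \<Rightarrow> real) \<Rightarrow> 'e list set \<Rightarrow> ('e list \<Rightarrow> real) \<Rightarrow> 'e list \<Rightarrow> real" where
  "path_cost c P f p = (\<Sum>e\<in>set p. c e (edge_load P f e))"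

definition wardrop_eq :: "('e \<Rightarrow> real \<Rightarrow> real) \<Rightarrow> 'e list set \<Rightarrow> real \<Rightarrow> ('e list \<Rightarrow> real) \<Rightarrow> bool" where
  "wardrop_eq c P M f \<longleftrightarrow> f \<in> feasible_flows P M \<and>
     (\<forall>p\<in>P. \<forall>q\<in>P. 0 < f p \<longrightarrow> path_cost c P f p \<le> path_cost c P f q)"

definition social_cost :: "('e::finite \<Rightarrow> real \<Rightarrow> real) \<Rightarrow> 'e list set \<Rightarrow> ('e list \<Rightarrow> real) \<Rightarrow> real" where
  "social_cost c P f = (\<Sum>e\<in>UNIV. edge_load P f e * c e (edge_load P f e))"

definition opt_cost :: "('e::finite \<Rightarrow> real \<Rightarrow> real) \<Rightarrow> 'e list set \<Rightarrow> real \<Rightarrow> real" where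
  "opt_cost c P M = Inf (social_cost c P ` feasible_flows P M)"

definition eq_cost :: "('e::finite \<Rightarrow> real \<Rightarrow> real) \<Rightarrow> 'e list set \<Rightarrow> real \<Rightarrow> real" where
  "eq_cost c P M = social_cost c P (SOME f. wardrop_eq c P M f)"

text \<open>Price of anarchy, with the convention PoA = 1 when Opt = 0.\<close>
definition PoA :: "('e::finite \<Rightarrow> real \<Rightarrow> real) \<Rightarrow> 'e list set \<Rightarrow> real \<Rightarrow> real" where
  "PoA c P M = (if opt_cost c P M = 0 then 1 else eq_cost c P M / opt_cost c P M)"

end

theory Submission imports Defs begin

lemma F_diff:
  fixes g :: "real \<Rightarrow> real"
  assumes cont: "continuous_on {0..} g" and mono: "mono_on {0..} g"
    and a: "0 \<le> a" "a \<le> b"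
  shows "(b - a) * g a \<le> integral {0..b} g - integral {0..a} g"
    and "integral {0..b} g - integral {0..a} g \<le> (b - a) * g b"
proof -
  have int: "g integrable_on {0..b}"
    by (rule integrable_continuous_interval, rule continuous_on_subset[OF cont]) auto
  have intab: "g integrable_on {a..b}"
    by (rule integrable_continuous_interval, rule continuous_on_subset[OF cont]) (use a in auto)
  have eq: "integral {0..b} g - integral {0..a} g = integral {a..b} g"
    using Henstock_Kurzweil_Integration.integral_combine[OF a(1) a(2) int] by simp
  have "integral {a..b} (\<lambda>x. g a) \<le> integral {a..b} g"
    by (rule integral_le[OF integrable_const_ivl intab]) (use a in \<open>auto intro!: mono_onD[OF mono]\<close>)
  then show "(b - a) * g a \<le> integral {0..b} g - integral {0..a} g"
    using a eq by simp
  have "integral {a..b} g \<le> integral {a..b} (\<lambda>x. g b)"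
    by (rule integral_le[OF intab integrable_const_ivl]) (use a in \<open>auto intro!: mono_onD[OF mono]\<close>)
  then show "integral {0..b} g - integral {0..a} g \<le> (b - a) * g b"
    using a eq by simp
qed

lemma F_cont:
  fixes g :: "real \<Rightarrow> real"
  assumes cont: "continuous_on {0..} g"
  shows "continuous_on {0..M} (\<lambda>x. integral {0..x} g)"
  by (rule indefinite_integral_continuous_1, rule integrable_continuous_interval,
      rule continuous_on_subset[OF cont]) auto

lemma social_cost_paths:
  fixes c :: "'e::finite \<Rightarrow> real \<Rightarrow> real"
  assumes "finite P"
  shows "social_cost c P f = (\<Sum>p\<in>P. f p * path_cost c P f p)"
proof -
  define x where "x = edge_load P f"
  have "social_cost c P f = (\<Sum>e\<in>UNIV. \<Sum>p\<in>{p\<in>P. e \<in> set p}. f p * c e (x e))"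
    unfolding social_cost_def x_def by (simp add: sum_distrib_right edge_load_def[of P f])
  also have "\<dots> = (\<Sum>p\<in>P. \<Sum>e\<in>{e\<in>UNIV. e \<in> set p}. f p * c e (x e))"
    by (rule sum.swap_restrict) (use assms in auto)
  also have "\<dots> = (\<Sum>p\<in>P. f p * path_cost c P f p)"
    unfolding path_cost_def x_def by (simp add: sum_distrib_left)
  finally show ?thesis .
qed


lemma edge_load_nonneg:
  assumes "f \<in> feasible_flows P M"
  shows "0 \<le> edge_load P f e"
  using assms unfolding edge_load_def feasible_flows_def by (auto intro!: sum_nonneg)

lemma edge_load_le:
  assumes "finite P" "f \<in> feasible_flows P M"
  shows "edge_load P f e \<le> M"
proof -
  have "edge_load P f e \<le> (\<Sum>p\<in>P. f p)"
    unfolding edge_load_def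
    by (rule sum_mono2) (use assms in \<open>auto simp: feasible_flows_def\<close>)
  then show ?thesis using assms by (simp add: feasible_flows_def)
qed

lemma edge_load_ge:
  assumes "finite P" "f \<in> feasible_flows P M" "p \<in> P" "e \<in> set p"
  shows "f p \<le> edge_load P f e"
  unfolding edge_load_def
  by (rule member_le_sum) (use assms in \<open>auto simp: feasible_flows_def\<close>)

lemma feasible_compact:
  assumes "finite P"
  shows "compact (feasible_flows P M)"
proof -
  define S where "S = (\<lambda>p::'a list. if p \<in> P then {0..M} else {0::real})"
  have "compactin (product_topology (\<lambda>_. euclidean) UNIV) (PiE UNIV S)"
    unfolding compactin_PiE by (auto simp: S_def)
  then have c1: "compact (PiE UNIV S)"
    by (simp add: euclidean_product_topology)
  have c2: "closed {f::'a list \<Rightarrow> real. (\<Sum>p\<in>P. f p) = M}"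
    by (rule closed_Collect_eq) (auto intro!: continuous_intros)
  have "feasible_flows P M = PiE UNIV S \<inter> {f. (\<Sum>p\<in>P. f p) = M}"
  proof (intro equalityI subsetI)
    fix f assume f: "f \<in> feasible_flows P M"
    have "\<forall>p\<in>P. f p \<le> M"
    proof
      fix p assume "p \<in> P"
      then have "f p \<le> (\<Sum>p\<in>P. f p)"
        by (intro member_le_sum) (use f assms in \<open>auto simp: feasible_flows_def\<close>)
      then show "f p \<le> M" using f by (simp add: feasible_flows_def)
    qed
    then show "f \<in> PiE UNIV S \<inter> {f. (\<Sum>p\<in>P. f p) = M}"
      using f by (auto simp: feasible_flows_def S_def PiE_UNIV_domain)
  next
    fix f assume "f \<in> PiE UNIV S \<inter> {f. (\<Sum>p\<in>P. f p) = M}"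
    then show "f \<in> feasible_flows P M"
      by (auto simp: feasible_flows_def S_def PiE_UNIV_domain Pi_iff split: if_splits)
  qed
  then show ?thesis using compact_Int_closed[OF c1 c2] by simp
qed

lemma feasible_nonempty:
  assumes "finite P" "p \<in> P" "0 \<le> M"
  shows "(\<lambda>q. if q = p then M else 0) \<in> feasible_flows P M"
  using assms by (auto simp: feasible_flows_def)

lemma edge_load_cont:
  "continuous_on UNIV (\<lambda>f. edge_load P f e)"
  unfolding edge_load_def by (auto intro!: continuous_intros)


lemma wardrop_exists:
  fixes c :: "'e::finite \<Rightarrow> real \<Rightarrow> real" and P :: "'e list set"
  assumes fin: "finite P" and ne: "P \<noteq> {}" and M: "0 \<le> M"
    and cont: "\<And>e. continuous_on {0..} (c e)"
    and mono: "\<And>e. mono_on {0..} (c e)"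
  shows "\<exists>f. wardrop_eq c P M f"
proof -
  define F where "F e x = integral {0..x} (c e)" for e x
  define K where "K = feasible_flows P M"
  define Phi where "Phi f = (\<Sum>e\<in>UNIV. F e (edge_load P f e))" for f
  obtain p0 where "p0 \<in> P" using ne by auto
  have Kne: "K \<noteq> {}" using feasible_nonempty[OF fin \<open>p0 \<in> P\<close> M] K_def by auto
  have "continuous_on K Phi"
    unfolding Phi_def
  proof (intro continuous_on_sum)
    fix e
    show "continuous_on K (\<lambda>f. F e (edge_load P f e))"
      unfolding F_def
      by (rule continuous_on_compose2[OF F_cont[OF cont[of e], of M]])
        (auto simp: F_def K_def intro: continuous_on_subset[OF edge_load_cont]
          edge_load_nonneg edge_load_le[OF fin])
  qed
  then obtain f where fK: "f \<in> K" and fmin: "\<And>g. g \<in> K \<Longrightarrow> Phi f \<le> Phi g"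
    using continuous_attains_inf[OF feasible_compact[OF fin] Kne[unfolded K_def]] K_def by blast
  define x where "x = edge_load P f"
  have x0: "0 \<le> x e" for e using edge_load_nonneg[of f P M e] fK K_def x_def by simp
  have "path_cost c P f p \<le> path_cost c P f q" if pq: "p \<in> P" "q \<in> P" "0 < f p" for p q
  proof (rule ccontr)
    assume "\<not> ?thesis"
    then have lt: "path_cost c P f q < path_cost c P f p" by simp
    then have pnq: "p \<noteq> q" by auto
    have xp: "f p \<le> x e" if "e \<in> set p" for e
      using edge_load_ge[OF fin fK[unfolded K_def] pq(1) that] x_def by simp
    define h where "h d = (\<Sum>e\<in>UNIV. if e \<in> set q \<and> e \<notin> set p then c e (x e + d)
        else if e \<in> set p \<and> e \<notin> set q then - c e (x e - d) else 0)" for d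
    have h0: "h 0 = path_cost c P f q - path_cost c P f p"
    proof -
      have "path_cost c P f q = (\<Sum>e\<in>UNIV. if e \<in> set q then c e (x e) else 0)"
        unfolding path_cost_def x_def by (simp add: sum.If_cases)
      moreover have "path_cost c P f p = (\<Sum>e\<in>UNIV. if e \<in> set p then c e (x e) else 0)"
        unfolding path_cost_def x_def by (simp add: sum.If_cases)
      ultimately show ?thesis
        unfolding h_def by (auto simp: sum_subtractf[symmetric] intro!: sum.cong)
    qed
    have hc: "continuous_on {0..f p} h"
      unfolding h_def
    proof (intro continuous_on_sum)
      fix e
      show "continuous_on {0..f p} (\<lambda>d. if e \<in> set q \<and> e \<notin> set p then c e (x e + d)
        else if e \<in> set p \<and> e \<notin> set q then - c e (x e - d) else 0)"
      proof (cases "e \<in> set q \<and> e \<notin> set p")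
        case True
        have "continuous_on {0..f p} (\<lambda>d. c e (x e + d))"
          by (rule continuous_on_compose2[OF cont[of e]]) (auto intro!: continuous_intros simp: x0 add_nonneg_nonneg)
        then show ?thesis using True by simp
      next
        case False
        show ?thesis
        proof (cases "e \<in> set p \<and> e \<notin> set q")
          case True
          have "continuous_on {0..f p} (\<lambda>d. c e (x e - d))"
            by (rule continuous_on_compose2[OF cont[of e]]) (use xp True in \<open>auto intro!: continuous_intros\<close>)
          then show ?thesis using True False by (simp add: continuous_on_minus)
        qed (use False in auto)
      qed
    qed
    have "0 \<in> {0..f p}" using pq by auto
    then obtain dd where dd: "dd > 0" and hdd: "\<And>y. y \<in> {0..f p} \<Longrightarrow> dist y 0 < dd \<Longrightarrow> dist (h y) (h 0) < - h 0"
      using hc[unfolded continuous_on_iff] h0 lt by (metis diff_less_0_iff_less neg_0_less_iff_less)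
    define d where "d = min (dd/2) (f p)"
    have d: "0 < d" "d \<le> f p" "d < dd" using dd pq by (auto simp: d_def)
    have hd: "h d < 0" using hdd[of d] d by (auto simp: dist_real_def)
    define g where "g r = f r - (if r = p then d else 0) + (if r = q then d else 0)" for r
    have gK: "g \<in> K"
      using fK pq d pnq fin unfolding K_def feasible_flows_def g_def
      by (auto simp: sum.distrib sum_subtractf)
    have gl: "edge_load P g e = x e - (if e \<in> set p then d else 0) + (if e \<in> set q then d else 0)" for e
      unfolding edge_load_def g_def x_def using pq fin
      by (simp add: sum.distrib sum_subtractf sum.delta' )
    have tb: "F e (edge_load P g e) - F e (x e) \<le> (if e \<in> set q \<and> e \<notin> set p then d * c e (x e + d)
        else if e \<in> set p \<and> e \<notin> set q then - (d * c e (x e - d)) else 0)" for e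
    proof -
      consider "e \<in> set q \<and> e \<notin> set p" | "e \<in> set p \<and> e \<notin> set q" | "e \<in> set p \<longleftrightarrow> e \<in> set q" by blast
      then show ?thesis
      proof cases
        case 1
        then show ?thesis using F_diff(2)[OF cont[of e] mono[of e], of "x e" "x e + d"] x0[of e] d gl[of e]
          by (simp add: F_def)
      next
        case 2
        then show ?thesis using F_diff(1)[OF cont[of e] mono[of e], of "x e - d" "x e"] xp[of e] d gl[of e]
          by (simp add: F_def)
      next
        case 3
        then show ?thesis using gl[of e] by auto
      qed
    qed
    have "Phi g - Phi f = (\<Sum>e\<in>UNIV. F e (edge_load P g e) - F e (x e))"
      by (simp add: Phi_def x_def sum_subtractf)
    also have "\<dots> \<le> (\<Sum>e\<in>UNIV. (if e \<in> set q \<and> e \<notin> set p then d * c e (x e + d)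
        else if e \<in> set p \<and> e \<notin> set q then - (d * c e (x e - d)) else 0))"
      by (rule sum_mono, rule tb)
    also have "\<dots> = d * h d"
      unfolding h_def sum_distrib_left by (auto intro!: sum.cong)
    also have "\<dots> < 0" using d hd by (simp add: mult_pos_neg)
    finally show False using fmin[OF gK] by simp
  qed
  then show ?thesis using fK K_def wardrop_eq_def by blast
qed


lemma le_lim_mono:
  fixes g :: "real \<Rightarrow> real"
  assumes "mono_on {0..} g" "(g \<longlongrightarrow> L) at_top" "0 \<le> x"
  shows "g x \<le> L"
proof (rule tendsto_lowerbound[OF assms(2)])
  show "\<forall>\<^sub>F t in at_top. g x \<le> g t"
    using eventually_ge_at_top[of x] by eventually_elim (use assms in \<open>auto intro: mono_onD\<close>)
qed simp

lemma unbounded_mono: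
  fixes g :: "real \<Rightarrow> real"
  assumes mono: "mono_on {0..} g" and nl: "\<not> (\<exists>L. (g \<longlongrightarrow> L) at_top)"
  shows "\<forall>\<^sub>F t in at_top. K \<le> g t"
proof (rule ccontr)
  assume ne: "\<not> ?thesis"
  have bnd: "g t < K" if "0 \<le> t" for t
  proof -
    from ne have "\<forall>T. \<exists>s\<ge>T. g s < K"
      unfolding eventually_at_top_linorder by (meson not_le)
    then obtain s where "s \<ge> t" "g s < K" by blast
    then show ?thesis using mono_onD[OF mono, of t s] that by auto
  qed
  define S where "S = Sup (g ` {0..})"
  have bdd: "bdd_above (g ` {0..})" using bnd by (auto intro!: bdd_aboveI[of _ K] less_imp_le)
  have "(g \<longlongrightarrow> S) at_top"
  proof (rule order_tendstoI)
    fix y assume "y < S"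
    then obtain t0 where t0: "t0 \<ge> 0" "y < g t0"
      using less_cSup_iff[OF _ bdd, of y] S_def by auto
    show "\<forall>\<^sub>F t in at_top. y < g t"
      using eventually_ge_at_top[of t0] by eventually_elim (use t0 mono_onD[OF mono, of t0] in \<open>force\<close>)
  next
    fix y assume "S < y"
    show "\<forall>\<^sub>F t in at_top. g t < y"
      using eventually_ge_at_top[of 0] by eventually_elim
        (use \<open>S < y\<close> cSup_upper[OF _ bdd] S_def in \<open>fastforce\<close>)
  qed
  then show False using nl by blast
qed


theorem corollary4p7:
  fixes tl_of hd_of :: "'e::finite \<Rightarrow> 'v"
    and orig dest :: 'v
    and P :: "'e list set"
    and c :: "'e \<Rightarrow> real \<Rightarrow> real"
  assumes "finite P" and "P \<noteq> {}"
    and "\<forall>p\<in>P. is_od_path tl_of hd_of orig dest p"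
    and "\<And>e. continuous_on {0..} (c e)"
    and "\<And>e. mono_on {0..} (c e)"
    and "\<And>e x. 0 \<le> x \<Longrightarrow> 0 \<le> c e x"
    and "\<exists>p\<in>P. \<forall>e\<in>set p. \<exists>L. (c e \<longlongrightarrow> L) at_top"
  shows "(PoA c P \<longlongrightarrow> 1) at_top"
proof -
  note fin = assms(1) and cont = assms(4) and mono = assms(5) and cpos = assms(6)
  define B where "B = {p\<in>P. \<forall>e\<in>set p. \<exists>L. (c e \<longlongrightarrow> L) at_top}"
  define Lm where "Lm e = Lim at_top (c e)" for e
  define Lam where "Lam p = (\<Sum>e\<in>set p. Lm e)" for p
  have Bfin: "finite B" and Bne: "B \<noteq> {}" using fin assms(7) by (auto simp: B_def)
  have Blim: "(c e \<longlongrightarrow> Lm e) at_top" if "p \<in> B" "e \<in> set p" for p e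
    using that tendsto_Lim[of at_top "c e"] by (auto simp: B_def Lm_def)
  define lam where "lam = Min (Lam ` B)"
  obtain p1 where p1B: "p1 \<in> B" and lam_def': "lam = Lam p1"
    using Min_in[of "Lam ` B"] Bfin Bne lam_def by (metis finite_imageI image_iff image_is_empty)
  have lam_le: "lam \<le> Lam p" if "p \<in> B" for p using Bfin that lam_def by auto
  have p1P: "p1 \<in> P" using p1B B_def by auto
  have Lm_nn: "0 \<le> Lm e" if "p \<in> B" "e \<in> set p" for p e
    by (rule tendsto_lowerbound[OF Blim[OF that]]) (auto intro!: cpos eventually_mono[OF eventually_ge_at_top[of 0]])
  have lam_nn: "0 \<le> lam" unfolding lam_def' Lam_def using p1B by (auto intro!: sum_nonneg Lm_nn)
  have pc_p1: "path_cost c P f p1 \<le> lam" if "f \<in> feasible_flows P M" for f M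
    unfolding lam_def' Lam_def path_cost_def
    by (rule sum_mono, rule le_lim_mono[OF mono Blim[OF p1B]]) (auto intro: edge_load_nonneg[OF that])
  have soc_nn: "0 \<le> social_cost c P f" if "f \<in> feasible_flows P M" for f M
    unfolding social_cost_def
    by (auto intro!: sum_nonneg mult_nonneg_nonneg cpos edge_load_nonneg[OF that])
  have bdd: "bdd_below (social_cost c P ` feasible_flows P M)" for M
    using soc_nn by (auto intro!: bdd_belowI[of _ 0])
  define f1 where "f1 M = (\<lambda>q. if q = p1 then M else 0)" for M :: real
  have f1F: "f1 M \<in> feasible_flows P M" if "0 \<le> M" for M
    using feasible_nonempty[OF fin p1P that] f1_def by simp
  have O_nn: "0 \<le> opt_cost c P M" if "0 \<le> M" for M
    unfolding opt_cost_def using f1F[OF that] soc_nn by (auto intro!: cInf_greatest)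
  have O_up: "opt_cost c P M \<le> M * lam" if "0 \<le> M" for M
  proof -
    have "opt_cost c P M \<le> social_cost c P (f1 M)"
      unfolding opt_cost_def using f1F[OF that] bdd by (auto intro!: cInf_lower)
    also have "\<dots> = M * path_cost c P (f1 M) p1"
    proof -
      have "(\<Sum>p\<in>P. f1 M p * path_cost c P (f1 M) p) = (\<Sum>p\<in>P. if p = p1 then M * path_cost c P (f1 M) p1 else 0)"
        by (rule sum.cong) (auto simp: f1_def)
      then show ?thesis using fin p1P by (simp add: social_cost_paths)
    qed
    also have "\<dots> \<le> M * lam" using pc_p1[OF f1F[OF that]] that by (simp add: mult_left_mono)
    finally show ?thesis .
  qed
  have O_le_E: "opt_cost c P M \<le> eq_cost c P M" and E_up: "eq_cost c P M \<le> M * lam"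
    if "0 \<le> M" for M
  proof -
    define fs where "fs = (SOME f. wardrop_eq c P M f)"
    have weq: "wardrop_eq c P M fs"
      unfolding fs_def using wardrop_exists[OF fin assms(2) that cont mono] by (rule someI_ex)
    then have fsF: "fs \<in> feasible_flows P M" by (simp add: wardrop_eq_def)
    show "opt_cost c P M \<le> eq_cost c P M"
      unfolding opt_cost_def eq_cost_def fs_def[symmetric] using fsF bdd by (auto intro!: cInf_lower)
    have "eq_cost c P M = (\<Sum>p\<in>P. fs p * path_cost c P fs p)"
      unfolding eq_cost_def fs_def[symmetric] using fin by (simp add: social_cost_paths)
    also have "\<dots> \<le> (\<Sum>p\<in>P. fs p * lam)"
    proof (rule sum_mono)
      fix p assume pP: "p \<in> P"
      have fp: "0 \<le> fs p" using fsF pP by (auto simp: feasible_flows_def)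
      show "fs p * path_cost c P fs p \<le> fs p * lam"
      proof (cases "fs p = 0")
        case False
        then have "path_cost c P fs p \<le> path_cost c P fs p1"
          using weq pP p1P fp by (auto simp: wardrop_eq_def)
        also have "\<dots> \<le> lam" by (rule pc_p1[OF fsF])
        finally show ?thesis using fp by (simp add: mult_left_mono)
      qed simp
    qed
    also have "\<dots> = M * lam" using fsF by (simp add: feasible_flows_def sum_distrib_right[symmetric])
    finally show "eq_cost c P M \<le> M * lam" .
  qed
  have O_low: "\<exists>T\<ge>0. \<forall>M\<ge>0. (lam - eta) * (M - real (card P) * T) \<le> opt_cost c P M"
    if eta: "0 < eta" "eta \<le> lam" for eta
  proof -
    define g where "g p t = (\<Sum>e\<in>set p. c e t)" for p t
    have ev: "\<forall>p\<in>P. \<forall>\<^sub>F t in at_top. lam - eta \<le> g p t"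
    proof
      fix p assume pP: "p \<in> P"
      show "\<forall>\<^sub>F t in at_top. lam - eta \<le> g p t"
      proof (cases "p \<in> B")
        case True
        have tl: "(g p \<longlongrightarrow> Lam p) at_top"
          unfolding g_def Lam_def by (rule tendsto_sum) (rule Blim[OF True])
        have "lam - eta < Lam p" using lam_le[OF True] eta by simp
        from order_tendstoD(1)[OF tl this] show ?thesis
          by (rule eventually_mono) simp
      next
        case False
        then obtain e where e: "e \<in> set p" "\<not> (\<exists>L. (c e \<longlongrightarrow> L) at_top)"
          using pP B_def by auto
        show ?thesis
          using unbounded_mono[OF mono e(2), of lam] eventually_ge_at_top[of 0]
        proof eventually_elim
          case (elim t)
          have "c e t \<le> g p t"
            unfolding g_def by (rule member_le_sum) (use e elim cpos in auto)
          then show ?case using elim eta by simp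
        qed
      qed
    qed
    then have "\<forall>\<^sub>F t in at_top. \<forall>p\<in>P. lam - eta \<le> g p t"
      by (rule eventually_ball_finite[OF fin])
    then obtain T0 where T0: "\<And>t p. t \<ge> T0 \<Longrightarrow> p \<in> P \<Longrightarrow> lam - eta \<le> g p t"
      unfolding eventually_at_top_linorder by metis
    define T where "T = max T0 0"
    have "(lam - eta) * (M - real (card P) * T) \<le> opt_cost c P M" if M: "0 \<le> M" for M
      unfolding opt_cost_def
    proof (rule cInf_greatest)
      show "social_cost c P ` feasible_flows P M \<noteq> {}" using f1F[OF M] by auto
    next
      fix s assume "s \<in> social_cost c P ` feasible_flows P M"
      then obtain f where fF: "f \<in> feasible_flows P M" and s: "s = social_cost c P f" by auto
      have "(lam - eta) * (M - real (card P) * T) = (\<Sum>p\<in>P. (lam - eta) * (f p - T))"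
        using fF by (simp add: feasible_flows_def sum_subtractf sum_distrib_left[symmetric] mult.commute)
      also have "\<dots> \<le> (\<Sum>p\<in>P. f p * path_cost c P f p)"
      proof (rule sum_mono)
        fix p assume pP: "p \<in> P"
        have fp: "0 \<le> f p" using fF pP by (auto simp: feasible_flows_def)
        have pcg: "g p (f p) \<le> path_cost c P f p"
          unfolding g_def path_cost_def
          by (rule sum_mono, rule mono_onD[OF mono]) (use fp edge_load_ge[OF fin fF pP] edge_load_nonneg[OF fF] in auto)
        have pcn: "0 \<le> path_cost c P f p"
          unfolding path_cost_def by (auto intro!: sum_nonneg cpos edge_load_nonneg[OF fF])
        show "(lam - eta) * (f p - T) \<le> f p * path_cost c P f p"
        proof (cases "f p \<ge> T")
          case True
          then have "lam - eta \<le> g p (f p)" using T0[OF _ pP, of "f p"] T_def by simp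
          then have "lam - eta \<le> path_cost c P f p" using pcg by simp
          then have "(lam - eta) * f p \<le> f p * path_cost c P f p"
            using fp by (metis mult.commute mult_left_mono)
          moreover have "(lam - eta) * (f p - T) \<le> (lam - eta) * f p"
            using eta T_def by (simp add: mult_left_mono)
          ultimately show ?thesis by linarith
        next
          case False
          then have "(lam - eta) * (f p - T) \<le> 0"
            using eta by (simp add: mult_nonneg_nonpos)
          also have "0 \<le> f p * path_cost c P f p" using fp pcn by simp
          finally show ?thesis .
        qed
      qed
      also have "\<dots> = s" using s fin by (simp add: social_cost_paths)
      finally show "(lam - eta) * (M - real (card P) * T) \<le> s" .
    qed
    then show ?thesis using T_def by (intro exI[of _ T]) auto
  qed
  show ?thesis
  proof (cases "lam = 0")
    case True
    have "\<forall>\<^sub>F M in at_top. PoA c P M = 1"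
      using eventually_ge_at_top[of "0::real"]
    proof eventually_elim
      case (elim M)
      then have "opt_cost c P M = 0" using O_nn[OF elim] O_up[OF elim] True by simp
      then show ?case by (simp add: PoA_def)
    qed
    then show ?thesis by (rule tendsto_eventually)
  next
    case False
    then have lpos: "0 < lam" using lam_nn by simp
    have Olim: "((\<lambda>M. opt_cost c P M / M) \<longlongrightarrow> lam) at_top"
    proof (rule order_tendstoI)
      fix a assume "lam < a"
      show "\<forall>\<^sub>F M in at_top. opt_cost c P M / M < a"
        using eventually_gt_at_top[of "0::real"]
      proof eventually_elim
        case (elim M)
        then have "opt_cost c P M / M \<le> lam" using O_up[of M] by (simp add: divide_le_eq mult.commute)
        then show ?case using \<open>lam < a\<close> by simp
      qed
    next
      fix a assume alt: "a < lam"
      define a' where "a' = max a 0"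
      define eta where "eta = (lam - a') / 2"
      have eta: "0 < eta" "eta \<le> lam" "lam - eta - a' = eta" "0 \<le> a'" "a \<le> a'"
        using alt lpos unfolding eta_def a'_def by (auto simp: field_simps)
      obtain T where T: "T \<ge> 0" "\<And>M. M \<ge> 0 \<Longrightarrow> (lam - eta) * (M - real (card P) * T) \<le> opt_cost c P M"
        using O_low[OF eta(1,2)] by blast
      define M0 where "M0 = (lam - eta) * real (card P) * T / eta + 1"
      show "\<forall>\<^sub>F M in at_top. a < opt_cost c P M / M"
        using eventually_gt_at_top[of "max M0 0"]
      proof eventually_elim
        case (elim M)
        then have M: "M > 0" "M > M0" by auto
        have "eta * M0 = (lam - eta) * real (card P) * T + eta"
          using eta by (simp add: M0_def field_simps)
        moreover have "eta * M0 < eta * M" using M eta by simp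
        ultimately have k: "(lam - eta) * real (card P) * T < eta * M" using eta(1) by linarith
        have "a' * M < (lam - eta) * (M - real (card P) * T)"
          using k eta(3) by (simp add: algebra_simps)
        also have "\<dots> \<le> opt_cost c P M" using T M by simp
        finally have "a' < opt_cost c P M / M" using M by (simp add: pos_less_divide_eq)
        then show ?case using eta by simp
      qed
    qed
    have Elim: "((\<lambda>M. eq_cost c P M / M) \<longlongrightarrow> lam) at_top"
    proof (rule tendsto_sandwich[OF _ _ Olim tendsto_const])
      show "\<forall>\<^sub>F M in at_top. opt_cost c P M / M \<le> eq_cost c P M / M"
        using eventually_gt_at_top[of "0::real"]
        by eventually_elim (use O_le_E in \<open>auto intro!: divide_right_mono\<close>)
      show "\<forall>\<^sub>F M in at_top. eq_cost c P M / M \<le> lam"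
        using eventually_gt_at_top[of "0::real"]
        by eventually_elim (use E_up in \<open>auto simp: divide_le_eq mult.commute\<close>)
    qed
    have lim1: "((\<lambda>M. (eq_cost c P M / M) / (opt_cost c P M / M)) \<longlongrightarrow> lam / lam) at_top"
      by (rule tendsto_divide[OF Elim Olim]) (use lpos in simp)
    have "\<forall>\<^sub>F M in at_top. (eq_cost c P M / M) / (opt_cost c P M / M) = PoA c P M"
      using order_tendstoD(1)[OF Olim lpos] eventually_gt_at_top[of "0::real"]
    proof eventually_elim
      case (elim M)
      then have "opt_cost c P M \<noteq> 0" by auto
      then show ?case using elim by (simp add: PoA_def)
    qed
    from tendsto_cong[OF this] lim1 lpos show ?thesis by simp
  qed
qed

end
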